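(* Let $G$ be a well-bicovered graph with a clique $C$ and let $H$ be a well-bicovered graph (disjoint from $G$) with a clique $D$, where $|C|=|D|=k$. Let $F$ be the graph formed from the disjoint union of $G$ and $H$ by adding $k$ vertex-disjoint paths, each joining a vertex of $C$ to a vertex of $D$ (so that the paths pair up $C$ and $D$ bijectively), with interior vertices new, such that all the added paths have lengths of the same parity. Then $F$ is well-bicovered.
   Context: All graphs are finite and simple; "subgraph" means induced subgraph. A graph is well-bicovered if every vertex-inclusion-maximal induced bipartite subgraph has the same order. *)

theory Defs
  imports Main
begin

definition graph :: "'a set \<Rightarrow> ('a \<Rightarrow> 'a \<Rightarrow> bool) \<Rightarrow> bool" where
  "graph V E \<longleftrightarrow> finite V \<and> (\<forall>x y. E x y \<longrightarrow> x \<in> V \<and> y \<in> V)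
     \<and> (\<forall>x y. E x y \<longrightarrow> E y x) \<and> (\<forall>x. \<not> E x x)"

definition independent :: "('a \<Rightarrow> 'a \<Rightarrow> bool) \<Rightarrow> 'a set \<Rightarrow> bool" where
  "independent E A \<longleftrightarrow> (\<forall>x\<in>A. \<forall>y\<in>A. \<not> E x y)"

definition bipartite_set :: "('a \<Rightarrow> 'a \<Rightarrow> bool) \<Rightarrow> 'a set \<Rightarrow> bool" where
  "bipartite_set E S \<longleftrightarrow> (\<exists>A B. A \<union> B = S \<and> A \<inter> B = {} \<and> independent E A \<and> independent E B)"

definition maximal_bipartite :: "'a set \<Rightarrow> ('a \<Rightarrow> 'a \<Rightarrow> bool) \<Rightarrow> 'a set \<Rightarrow> bool" where
  "maximal_bipartite V E S \<longleftrightarrow> S \<subseteq> V \<and> bipartite_set E S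
     \<and> (\<forall>T. S \<subset> T \<and> T \<subseteq> V \<longrightarrow> \<not> bipartite_set E T)"

definition well_bicovered :: "'a set \<Rightarrow> ('a \<Rightarrow> 'a \<Rightarrow> bool) \<Rightarrow> bool" where
  "well_bicovered V E \<longleftrightarrow>
     (\<forall>S T. maximal_bipartite V E S \<and> maximal_bipartite V E T \<longrightarrow> card S = card T)"

definition clique :: "'a set \<Rightarrow> ('a \<Rightarrow> 'a \<Rightarrow> bool) \<Rightarrow> 'a set \<Rightarrow> bool" where
  "clique V E C \<longleftrightarrow> C \<subseteq> V \<and> (\<forall>x\<in>C. \<forall>y\<in>C. x \<noteq> y \<longrightarrow> E x y)"

text \<open>Vertices of the glued graph: G-vertices, H-vertices, and new interior path vertices
  (Pv c i is the i-th interior vertex of the path starting at c).\<close>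
datatype ('a, 'b) pvert = Gv 'a | Hv 'b | Pv 'a nat

definition pathv :: "('a \<Rightarrow> 'b) \<Rightarrow> ('a \<Rightarrow> nat) \<Rightarrow> 'a \<Rightarrow> nat \<Rightarrow> ('a, 'b) pvert" where
  "pathv f len c i = (if i = 0 then Gv c else if i = len c then Hv (f c) else Pv c i)"

definition glue_V :: "'a set \<Rightarrow> 'b set \<Rightarrow> 'a set \<Rightarrow> ('a \<Rightarrow> nat) \<Rightarrow> ('a, 'b) pvert set" where
  "glue_V VG VH C len = Gv ` VG \<union> Hv ` VH \<union> {Pv c i | c i. c \<in> C \<and> 1 \<le> i \<and> i < len c}"

definition glue_E :: "('a \<Rightarrow> 'a \<Rightarrow> bool) \<Rightarrow> ('b \<Rightarrow> 'b \<Rightarrow> bool) \<Rightarrow> 'a set \<Rightarrow> ('a \<Rightarrow> 'b)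
    \<Rightarrow> ('a \<Rightarrow> nat) \<Rightarrow> ('a, 'b) pvert \<Rightarrow> ('a, 'b) pvert \<Rightarrow> bool" where
  "glue_E EG EH C f len x y \<longleftrightarrow>
     (\<exists>u v. x = Gv u \<and> y = Gv v \<and> EG u v)
   \<or> (\<exists>u v. x = Hv u \<and> y = Hv v \<and> EH u v)
   \<or> (\<exists>c\<in>C. \<exists>i < len c.
        (x = pathv f len c i \<and> y = pathv f len c (Suc i))
      \<or> (y = pathv f len c i \<and> x = pathv f len c (Suc i)))"

end

theory Submission
  imports Defs
begin

lemma bip_iff:
  "bipartite_set E S \<longleftrightarrow> (\<exists>col::_\<Rightarrow>bool. \<forall>x\<in>S. \<forall>y\<in>S. E x y \<longrightarrow> col x \<noteq> col y)"
proof
  assume "bipartite_set E S"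
  then obtain A B where AB: "A \<union> B = S" "A \<inter> B = {}" "independent E A" "independent E B"
    unfolding bipartite_set_def by blast
  show "\<exists>col::_\<Rightarrow>bool. \<forall>x\<in>S. \<forall>y\<in>S. E x y \<longrightarrow> col x \<noteq> col y"
    by (rule exI[of _ "\<lambda>x. x \<in> A"]) (use AB in \<open>auto simp: independent_def\<close>)
next
  assume "\<exists>col::_\<Rightarrow>bool. \<forall>x\<in>S. \<forall>y\<in>S. E x y \<longrightarrow> col x \<noteq> col y"
  then obtain col :: "_ \<Rightarrow> bool" where c: "\<forall>x\<in>S. \<forall>y\<in>S. E x y \<longrightarrow> col x \<noteq> col y" by blast
  show "bipartite_set E S" unfolding bipartite_set_def
    by (rule exI[of _ "{x\<in>S. col x}"], rule exI[of _ "{x\<in>S. \<not> col x}"])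
       (use c in \<open>auto simp: independent_def\<close>)
qed

lemma restrG:
  assumes "bipartite_set (glue_E EG EH C f len) T"
  shows "bipartite_set EG {u. Gv u \<in> T}"
proof -
  obtain col :: "_ \<Rightarrow> bool" where c: "\<forall>x\<in>T. \<forall>y\<in>T. glue_E EG EH C f len x y \<longrightarrow> col x \<noteq> col y"
    using assms bip_iff by metis
  show ?thesis unfolding bip_iff
    by (rule exI[of _ "\<lambda>u. col (Gv u)"]) (use c in \<open>auto simp: glue_E_def\<close>)
qed

lemma restrH:
  assumes "bipartite_set (glue_E EG EH C f len) T"
  shows "bipartite_set EH {u. Hv u \<in> T}"
proof -
  obtain col :: "_ \<Rightarrow> bool" where c: "\<forall>x\<in>T. \<forall>y\<in>T. glue_E EG EH C f len x y \<longrightarrow> col x \<noteq> col y"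
    using assms bip_iff by metis
  show ?thesis unfolding bip_iff
    by (rule exI[of _ "\<lambda>u. col (Hv u)"]) (use c in \<open>auto simp: glue_E_def\<close>)
qed

lemma key:
  assumes cG: "\<forall>x\<in>C. \<forall>y\<in>C. x \<noteq> y \<longrightarrow> EG x y"
    and cH: "\<forall>x\<in>D. \<forall>y\<in>D. x \<noteq> y \<longrightarrow> EH x y"
    and inj: "inj_on f C" and fD: "f ` C \<subseteq> D"
    and par: "\<forall>c\<in>C. \<forall>c'\<in>C. even (len c) = even (len c')"
    and bG: "bipartite_set EG SG" and bH: "bipartite_set EH SH"
  shows "bipartite_set (glue_E EG EH C f len)
           (Gv ` SG \<union> Hv ` SH \<union> {Pv c i | c i. c \<in> C \<and> 1 \<le> i \<and> i < len c})"
    (is "bipartite_set ?E ?T")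
proof -
  obtain colG :: "_ \<Rightarrow> bool" where cg: "\<forall>x\<in>SG. \<forall>y\<in>SG. EG x y \<longrightarrow> colG x \<noteq> colG y"
    using bG bip_iff by metis
  obtain colH :: "_ \<Rightarrow> bool" where ch: "\<forall>x\<in>SH. \<forall>y\<in>SH. EH x y \<longrightarrow> colH x \<noteq> colH y"
    using bH bip_iff by metis
  define c0 where "c0 = (SOME c. c \<in> C \<and> c \<in> SG \<and> f c \<in> SH)"
  define flip where "flip = (if \<exists>c\<in>C. c \<in> SG \<and> f c \<in> SH
      then colH (f c0) \<noteq> (colG c0 \<noteq> odd (len c0)) else False)"
  have cons: "(colH (f c) \<noteq> flip) = (colG c \<noteq> odd (len c))"
    if c: "c \<in> C" "c \<in> SG" "f c \<in> SH" for c
  proof -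
    have ex: "\<exists>c\<in>C. c \<in> SG \<and> f c \<in> SH" using c by blast
    then have c0: "c0 \<in> C" "c0 \<in> SG" "f c0 \<in> SH" unfolding c0_def by (metis (mono_tags, lifting) someI_ex)+
    have fl: "flip = (colH (f c0) \<noteq> (colG c0 \<noteq> odd (len c0)))" using ex flip_def by simp
    show ?thesis
    proof (cases "c = c0")
      case True then show ?thesis using fl by auto
    next
      case False
      have "EG c c0" using cG c c0 False by blast
      then have g: "colG c \<noteq> colG c0" using cg c c0 by blast
      have "f c \<noteq> f c0" using inj False c c0 inj_on_def by metis
      then have "EH (f c) (f c0)" using cH fD c c0 by blast
      then have h: "colH (f c) \<noteq> colH (f c0)" using ch c c0 by blast
      have "odd (len c) = odd (len c0)" using par c c0 by blast
      then show ?thesis using g h fl by auto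
    qed
  qed
  define g where "g c i = (if c \<in> SG then colG c \<noteq> odd i else (colH (f c) \<noteq> flip) \<noteq> odd (len c - i))" for c i
  define col where "col x = (case x of Gv u \<Rightarrow> colG u | Hv v \<Rightarrow> colH v \<noteq> flip | Pv c i \<Rightarrow> g c i)" for x
  have pv: "col (pathv f len c i) = g c i" if "c \<in> C" "i \<le> len c" "pathv f len c i \<in> ?T" for c i
  proof -
    consider "i = 0" | "i \<noteq> 0" "i = len c" | "i \<noteq> 0" "i \<noteq> len c" by blast
    then show ?thesis
    proof cases
      case 1
      then have "c \<in> SG" using that by (auto simp: pathv_def)
      then show ?thesis using 1 by (simp add: pathv_def col_def g_def)
    next
      case 2
      then have fc: "f c \<in> SH" using that by (auto simp: pathv_def)
      show ?thesis
      proof (cases "c \<in> SG")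
        case True
        then show ?thesis using 2 cons[OF that(1) True fc] by (simp add: pathv_def col_def g_def)
      next
        case False
        then show ?thesis using 2 by (simp add: pathv_def col_def g_def)
      qed
    next
      case 3
      then show ?thesis by (simp add: pathv_def col_def)
    qed
  qed
  have gd: "g c i \<noteq> g c (Suc i)" if "i < len c" for c i
  proof -
    have "len c - i = Suc (len c - Suc i)" using that by simp
    then show ?thesis by (simp add: g_def)
  qed
  show ?thesis unfolding bip_iff
  proof (intro exI[of _ col] ballI impI)
    fix x y assume x: "x \<in> ?T" and y: "y \<in> ?T" and e: "?E x y"
    from e consider (G) u v where "x = Gv u" "y = Gv v" "EG u v"
      | (H) u v where "x = Hv u" "y = Hv v" "EH u v"
      | (P1) c i where "c \<in> C" "i < len c" "x = pathv f len c i" "y = pathv f len c (Suc i)"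
      | (P2) c i where "c \<in> C" "i < len c" "y = pathv f len c i" "x = pathv f len c (Suc i)"
      unfolding glue_E_def by blast
    then show "col x \<noteq> col y"
    proof cases
      case G then show ?thesis using x y cg by (auto simp: col_def)
    next
      case H then show ?thesis using x y ch by (auto simp: col_def)
    next
      case P1 then show ?thesis using pv[of c i] pv[of c "Suc i"] gd[of i c] x y by simp
    next
      case P2 then show ?thesis using pv[of c i] pv[of c "Suc i"] gd[of i c] x y by simp
    qed
  qed
qed


lemma glue_structure:
  assumes cG: "\<forall>x\<in>C. \<forall>y\<in>C. x \<noteq> y \<longrightarrow> EG x y"
    and cH: "\<forall>x\<in>D. \<forall>y\<in>D. x \<noteq> y \<longrightarrow> EH x y"
    and inj: "inj_on f C" and fD: "f ` C \<subseteq> D"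
    and par: "\<forall>c\<in>C. \<forall>c'\<in>C. even (len c) = even (len c')"
    and mS: "maximal_bipartite (glue_V VG VH C len) (glue_E EG EH C f len) S"
  shows "maximal_bipartite VG EG {u. Gv u \<in> S} \<and> maximal_bipartite VH EH {u. Hv u \<in> S}
     \<and> S = Gv ` {u. Gv u \<in> S} \<union> Hv ` {u. Hv u \<in> S} \<union> {Pv c i | c i. c \<in> C \<and> 1 \<le> i \<and> i < len c}"
proof -
  let ?P = "{Pv c i | c i. c \<in> C \<and> 1 \<le> i \<and> i < len c}"
  let ?V = "glue_V VG VH C len" and ?E = "glue_E EG EH C f len"
  define SG where "SG = {u. Gv u \<in> S}"
  define SH where "SH = {u. Hv u \<in> S}"
  have SV: "S \<subseteq> ?V" using mS unfolding maximal_bipartite_def by simp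
  have bS: "bipartite_set ?E S" using mS unfolding maximal_bipartite_def by simp
  have mx: "\<not> bipartite_set ?E T" if "S \<subset> T" "T \<subseteq> ?V" for T
    using mS that unfolding maximal_bipartite_def by simp
  have SGV: "SG \<subseteq> VG" using SV unfolding SG_def glue_V_def by auto
  have SHV: "SH \<subseteq> VH" using SV unfolding SH_def glue_V_def by auto
  have bG: "bipartite_set EG SG" unfolding SG_def by (rule restrG[OF bS])
  have bH: "bipartite_set EH SH" unfolding SH_def by (rule restrH[OF bS])
  have sub: "Gv ` A \<union> Hv ` B \<union> ?P \<subseteq> ?V" if "A \<subseteq> VG" "B \<subseteq> VH" for A B
    using that unfolding glue_V_def by auto
  have bT: "bipartite_set ?E (Gv ` A \<union> Hv ` B \<union> ?P)"
    if "bipartite_set EG A" "bipartite_set EH B" for A B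
    by (rule key[OF cG cH inj fD par that])
  have ST: "S \<subseteq> Gv ` SG \<union> Hv ` SH \<union> ?P"
  proof
    fix x assume "x \<in> S"
    then show "x \<in> Gv ` SG \<union> Hv ` SH \<union> ?P"
      using SV unfolding SG_def SH_def glue_V_def by (cases x) auto
  qed
  have Seq: "S = Gv ` SG \<union> Hv ` SH \<union> ?P"
  proof (rule ccontr)
    assume "S \<noteq> Gv ` SG \<union> Hv ` SH \<union> ?P"
    then have "S \<subset> Gv ` SG \<union> Hv ` SH \<union> ?P" using ST by (rule psubsetI[rotated])
    from mx[OF this sub[OF SGV SHV]] bT[OF bG bH] show False by simp
  qed
  have mG: "maximal_bipartite VG EG SG"
    unfolding maximal_bipartite_def
  proof (intro conjI SGV bG allI impI)
    fix T assume T: "SG \<subset> T \<and> T \<subseteq> VG"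
    show "\<not> bipartite_set EG T"
    proof
      assume b: "bipartite_set EG T"
      from T obtain u where u: "u \<in> T" "u \<notin> SG" by blast
      have "S \<subset> Gv ` T \<union> Hv ` SH \<union> ?P"
      proof
        show "S \<subseteq> Gv ` T \<union> Hv ` SH \<union> ?P" using Seq T by blast
        show "S \<noteq> Gv ` T \<union> Hv ` SH \<union> ?P" using u unfolding SG_def by blast
      qed
      from mx[OF this sub[of T SH]] T SHV bT[OF b bH] show False by simp
    qed
  qed
  have mH: "maximal_bipartite VH EH SH"
    unfolding maximal_bipartite_def
  proof (intro conjI SHV bH allI impI)
    fix T assume T: "SH \<subset> T \<and> T \<subseteq> VH"
    show "\<not> bipartite_set EH T"
    proof
      assume b: "bipartite_set EH T"
      from T obtain u where u: "u \<in> T" "u \<notin> SH" by blast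
      have "S \<subset> Gv ` SG \<union> Hv ` T \<union> ?P"
      proof
        show "S \<subseteq> Gv ` SG \<union> Hv ` T \<union> ?P" using Seq T by blast
        show "S \<noteq> Gv ` SG \<union> Hv ` T \<union> ?P" using u unfolding SH_def by blast
      qed
      from mx[OF this sub[of SG T]] T SGV bT[OF bG b] show False by simp
    qed
  qed
  show ?thesis using mG mH Seq unfolding SG_def SH_def by blast
qed

lemma card_split:
  fixes A :: "'a set" and B :: "'b set"
  assumes "finite A" "finite B" "finite C"
  shows "card (Gv ` A \<union> Hv ` B \<union> {Pv c i | c i. c \<in> C \<and> 1 \<le> i \<and> i < len c})
     = card A + card B + card ({Pv c i | c i. c \<in> C \<and> 1 \<le> i \<and> i < len c} :: ('a, 'b) pvert set)"
proof -
  let ?P = "{Pv c i | c i. c \<in> C \<and> 1 \<le> i \<and> i < len c} :: ('a, 'b) pvert set"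
  have "?P \<subseteq> (\<lambda>(c, i). Pv c i) ` (C \<times> {..<Max (len ` C)})"
  proof
    fix x assume "x \<in> ?P"
    then obtain c i where x: "x = Pv c i" "c \<in> C" "i < len c" by blast
    have "len c \<le> Max (len ` C)" using x assms(3) by simp
    then show "x \<in> (\<lambda>(c, i). Pv c i) ` (C \<times> {..<Max (len ` C)})" using x by force
  qed
  moreover have "finite ((\<lambda>(c, i). Pv c i) ` (C \<times> {..<Max (len ` C)}))"
    using assms(3) by simp
  ultimately have fP: "finite ?P" by (rule finite_subset)
  have "card (Gv ` A \<union> Hv ` B \<union> ?P) = card (Gv ` A \<union> Hv ` B) + card ?P"
    by (rule card_Un_disjoint) (use assms fP in auto)
  also have "card (Gv ` A \<union> Hv ` B :: ('a, 'b) pvert set) = card (Gv ` A :: ('a, 'b) pvert set) + card (Hv ` B :: ('a, 'b) pvert set)"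
    by (rule card_Un_disjoint) (use assms in auto)
  also have "card (Gv ` A :: ('a, 'b) pvert set) = card A" by (simp add: card_image inj_on_def)
  also have "card (Hv ` B :: ('a, 'b) pvert set) = card B" by (simp add: card_image inj_on_def)
  finally show ?thesis .
qed

theorem mainTheorem11:
  fixes VG :: "'a set" and EG :: "'a \<Rightarrow> 'a \<Rightarrow> bool"
    and VH :: "'b set" and EH :: "'b \<Rightarrow> 'b \<Rightarrow> bool"
    and C :: "'a set" and D :: "'b set" and k :: nat
    and f :: "'a \<Rightarrow> 'b" and len :: "'a \<Rightarrow> nat"
  assumes "graph VG EG" and "well_bicovered VG EG" and "clique VG EG C"
    and "graph VH EH" and "well_bicovered VH EH" and "clique VH EH D"
    and "card C = k" and "card D = k"
    and "bij_betw f C D"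
    and "\<forall>c\<in>C. len c \<ge> 1"
    and "\<forall>c\<in>C. \<forall>c'\<in>C. even (len c) = even (len c')"
  shows "well_bicovered (glue_V VG VH C len) (glue_E EG EH C f len)"
proof -
  have cG: "\<forall>x\<in>C. \<forall>y\<in>C. x \<noteq> y \<longrightarrow> EG x y" using assms(3) unfolding clique_def by blast
  have cH: "\<forall>x\<in>D. \<forall>y\<in>D. x \<noteq> y \<longrightarrow> EH x y" using assms(6) unfolding clique_def by blast
  have inj: "inj_on f C" and fD: "f ` C \<subseteq> D" using assms(9) unfolding bij_betw_def by auto
  have fVG: "finite VG" using assms(1) unfolding graph_def by blast
  have fVH: "finite VH" using assms(4) unfolding graph_def by blast
  have fC: "finite C" using assms(3) fVG unfolding clique_def by (meson finite_subset)
  note st = glue_structure[OF cG cH inj fD assms(11)]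
  show ?thesis unfolding well_bicovered_def
  proof (intro allI impI)
    fix S T assume a: "maximal_bipartite (glue_V VG VH C len) (glue_E EG EH C f len) S \<and>
       maximal_bipartite (glue_V VG VH C len) (glue_E EG EH C f len) T"
    have S: "maximal_bipartite VG EG {u. Gv u \<in> S}" "maximal_bipartite VH EH {u. Hv u \<in> S}"
      "S = Gv ` {u. Gv u \<in> S} \<union> Hv ` {u. Hv u \<in> S} \<union> {Pv c i | c i. c \<in> C \<and> 1 \<le> i \<and> i < len c}"
      using st a by blast+
    have T: "maximal_bipartite VG EG {u. Gv u \<in> T}" "maximal_bipartite VH EH {u. Hv u \<in> T}"
      "T = Gv ` {u. Gv u \<in> T} \<union> Hv ` {u. Hv u \<in> T} \<union> {Pv c i | c i. c \<in> C \<and> 1 \<le> i \<and> i < len c}"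
      using st a by blast+
    have eG: "card {u. Gv u \<in> S} = card {u. Gv u \<in> T}" using assms(2) S(1) T(1) unfolding well_bicovered_def by blast
    have eH: "card {u. Hv u \<in> S} = card {u. Hv u \<in> T}" using assms(5) S(2) T(2) unfolding well_bicovered_def by blast
    have fin: "finite {u. Gv u \<in> S}" "finite {u. Hv u \<in> S}" "finite {u. Gv u \<in> T}" "finite {u. Hv u \<in> T}"
      using S T fVG fVH unfolding maximal_bipartite_def by (meson finite_subset)+
    have cS: "card S = card {u. Gv u \<in> S} + card {u. Hv u \<in> S} + card ({Pv c i | c i. c \<in> C \<and> 1 \<le> i \<and> i < len c} :: ('a, 'b) pvert set)"
      using card_split[OF fin(1,2) fC, of len] unfolding S(3)[symmetric] .
    have cT: "card T = card {u. Gv u \<in> T} + card {u. Hv u \<in> T} + card ({Pv c i | c i. c \<in> C \<and> 1 \<le> i \<and> i < len c} :: ('a, 'b) pvert set)"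
      using card_split[OF fin(3,4) fC, of len] unfolding T(3)[symmetric] .
    show "card S = card T" using cS cT eG eH by linarith
  qed
qed

end
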